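(* Let $\mathcal{F} = (\mathbb{R}^{d^{L+1}})^{\mathbb{R}^{d^0}}$ with the product topology and usual Borel product $\sigma$-algebra, let $P_{f_n}$ ($n \ge 1$) and $P_f$ be probability distributions on $\mathcal{F}$ with $P_{f_n} \Rightarrow P_f$, let $D = \{(x_i,y_i)\}_{i=1}^m$ be a fixed finite dataset with inputs $\mathcal{X} = \{x_i\}$, and let $\ell \colon \mathbb{R}^{|D| d^{L+1}} \to [0,\infty)$ be a continuous bounded likelihood satisfying the likelihood assumption described in the context, with $\int \ell(f(\mathcal{X}))\,dP_f(f) > 0$. Let $P_{f_n\mid D}$, $P_{f\mid D}$ be the posteriors defined by $\frac{dP_{f_n\mid D}}{dP_{f_n}}(f) = \ell(f(\mathcal{X}))/\int \ell(g(\mathcal{X}))\,dP_{f_n}(g)$ and $\frac{dP_{f\mid D}}{dP_{f}}(f) = \ell(f(\mathcal{X}))/\int \ell(g(\mathcal{X}))\,dP_{f}(g)$. If $h \colon \mathcal{F} \to \mathbb{R}$ is continuous and $\int |h|\, dP_{f_n} \to \int |h| \, dP_f < \infty$, then $$\int h \, dP_{f_n \mid D} \to \int h \, dP_{f\mid D}.$$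
   Context: Here $f(\mathcal{X}) = [f(x)]_{x \in \mathcal{X}} \in \mathbb{R}^{|D| d^{L+1}}$ and $\Rightarrow$ denotes weak convergence ($\int g\,dP_n \to \int g\,dP$ for all continuous bounded real $g$). Likelihood assumption: the targets $\mathcal{Y}=\{y_i\}$ depend on the network parameters and inputs only through the outputs $f_n(\mathcal{X})$; there is a measure $\nu$ with $P_{\mathcal{Y}\mid f_n(\mathcal{X})} \ll \nu$ for every value of $f_n(\mathcal{X})$; and the density $\frac{dP_{\mathcal{Y}\mid f_n(\mathcal{X})}}{d\nu}(\mathcal{Y})$, as a function of $f_n(\mathcal{X})$, equals the same continuous bounded function $\ell$ for all $n$. *)

theory Defs
  imports "HOL-Probability.Probability"
begin

text \<open>The function space F = (R^dL)^(R^d0), with the product sigma-algebra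
  (product of Borel sigma-algebras); its topology is the product topology,
  which is the library's topology on the function type.\<close>
definition FM :: "('a \<Rightarrow> 'b::topological_space) measure" where
  "FM = (\<Pi>\<^sub>M x\<in>UNIV. borel)"

definition weak_conv_fun :: "(nat \<Rightarrow> 'f::topological_space measure) \<Rightarrow> 'f measure \<Rightarrow> bool" where
  "weak_conv_fun Ps P \<longleftrightarrow>
     (\<forall>g :: 'f \<Rightarrow> real. continuous_on UNIV g \<and> bounded (range g) \<longrightarrow>
        (\<lambda>n. integral\<^sup>L (Ps n) g) \<longlonglongrightarrow> integral\<^sup>L P g)"

definition evalX :: "('i::finite \<Rightarrow> 'a) \<Rightarrow> ('a \<Rightarrow> real ^ 'd) \<Rightarrow> real ^ 'd ^ 'i" where
  "evalX xs f = (\<chi> i. f (xs i))"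

definition posterior :: "('a \<Rightarrow> real ^ 'd) measure \<Rightarrow> (real ^ 'd ^ 'i \<Rightarrow> real)
     \<Rightarrow> ('i::finite \<Rightarrow> 'a) \<Rightarrow> ('a \<Rightarrow> real ^ 'd) measure" where
  "posterior P l xs = density P (\<lambda>f. ennreal (l (evalX xs f) / (\<integral>g. l (evalX xs g) \<partial>P)))"

end

theory Submission
  imports Defs
begin

lemma evalX_meas:
  fixes xs :: "'m::finite \<Rightarrow> 'a"
  shows "(evalX xs :: ('a \<Rightarrow> real ^ 'd) \<Rightarrow> _) \<in> borel_measurable FM"
proof -
  have c: "(\<lambda>f::'a \<Rightarrow> real ^ 'd. f a) \<in> borel_measurable FM" for a
    unfolding FM_def by (rule measurable_component_singleton) simp
  show ?thesis
    unfolding borel_measurable_euclidean_space[where 'c="real ^ 'd ^ 'm"]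
  proof
    fix b :: "real ^ 'd ^ 'm" assume "b \<in> Basis"
    then obtain i u where b: "b = axis i u" "u \<in> Basis" unfolding Basis_vec_def by auto
    have "(\<lambda>f. evalX xs f \<bullet> b) = (\<lambda>f::'a \<Rightarrow> real ^ 'd. u \<bullet> f (xs i))"
      proof
      fix f :: "'a \<Rightarrow> real ^ 'd"
      have "evalX xs f \<bullet> b = evalX xs f \<bullet> axis i u" using b by simp
      also have "\<dots> = (evalX xs f $ i) \<bullet> u" by (rule inner_axis)
      also have "\<dots> = u \<bullet> f (xs i)" by (simp add: evalX_def inner_commute)
      finally show "evalX xs f \<bullet> b = u \<bullet> f (xs i)" .
    qed
    moreover have "(\<lambda>f::'a \<Rightarrow> real ^ 'd. u \<bullet> f (xs i)) \<in> borel_measurable FM"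
      using c[of "xs i"] by measurable
    ultimately show "(\<lambda>f. evalX xs f \<bullet> b) \<in> borel_measurable FM" by simp
  qed
qed

lemma evalX_cont:
  fixes xs :: "'m::finite \<Rightarrow> 'a"
  shows "continuous_on UNIV (evalX xs :: ('a \<Rightarrow> real ^ 'd) \<Rightarrow> _)"
  unfolding evalX_def by (intro continuous_on_vec_lambda continuous_on_product_coordinates)


lemma lsc_lemma:
  fixes Ps :: "nat \<Rightarrow> ('a \<Rightarrow> 'b::topological_space) measure"
    and g :: "('a \<Rightarrow> 'b) \<Rightarrow> real"
  assumes Ps_prob: "\<And>n. prob_space (Ps n)" and Ps_sets: "\<And>n. sets (Ps n) = sets FM"
    and P_prob: "prob_space P" and P_sets: "sets P = sets FM"
    and weak: "weak_conv_fun Ps P"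
    and g_cont: "continuous_on UNIV g" and g_nn: "\<And>x. 0 \<le> g x"
    and g_meas: "g \<in> borel_measurable FM"
    and g_int: "integrable P g"
    and g_intn: "eventually (\<lambda>n. integrable (Ps n) g) sequentially"
    and e: "e > 0"
  shows "eventually (\<lambda>n. integral\<^sup>L P g - e < integral\<^sup>L (Ps n) g) sequentially"
proof -
  have gP: "g \<in> borel_measurable P" unfolding measurable_cong_sets[OF P_sets refl] by (rule g_meas)
  have gPn: "g \<in> borel_measurable (Ps n)" for n
    unfolding measurable_cong_sets[OF Ps_sets refl] by (rule g_meas)
  have lim: "(\<lambda>M::nat. \<integral>x. min (g x) (real M) \<partial>P) \<longlonglongrightarrow> integral\<^sup>L P g"
  proof (rule integral_dominated_convergence[where w=g])
    show "g \<in> borel_measurable P" by (rule gP)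
    show "(\<lambda>x. min (g x) (real M)) \<in> borel_measurable P" for M using gP by measurable
    show "integrable P g" by (rule g_int)
    show "AE x in P. (\<lambda>M. min (g x) (real M)) \<longlonglongrightarrow> g x"
    proof (intro AE_I2 tendsto_eventually)
      fix x
      obtain N :: nat where "g x \<le> real N" using real_arch_simple by blast
      then show "eventually (\<lambda>M. min (g x) (real M) = g x) sequentially"
        unfolding eventually_sequentially
        by (intro exI[of _ N]) (auto simp: min_def)
    qed
    show "AE x in P. norm (min (g x) (real M)) \<le> g x" for M
      using g_nn by (intro AE_I2) (auto simp: min_def)
  qed
  have "integral\<^sup>L P g - e/2 < integral\<^sup>L P g" using e by simp
  from order_tendstoD(1)[OF lim this]
  have "\<exists>M::nat. integral\<^sup>L P g - e/2 < (\<integral>x. min (g x) (real M) \<partial>P)"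
    unfolding eventually_sequentially by blast
  then obtain M :: nat where M: "integral\<^sup>L P g - e/2 < (\<integral>x. min (g x) (real M) \<partial>P)"
    by blast
  have "continuous_on UNIV (\<lambda>x. min (g x) (real M))"
    by (intro continuous_on_min g_cont continuous_on_const)
  moreover have "bounded (range (\<lambda>x. min (g x) (real M)))"
    unfolding bounded_iff using g_nn by (intro exI[of _ "real M"]) (auto simp: min_def)
  ultimately have tl: "(\<lambda>n. \<integral>x. min (g x) (real M) \<partial>Ps n) \<longlonglongrightarrow> (\<integral>x. min (g x) (real M) \<partial>P)"
    using weak unfolding weak_conv_fun_def by blast
  have "(\<integral>x. min (g x) (real M) \<partial>P) - e/2 < (\<integral>x. min (g x) (real M) \<partial>P)" using e by simp
  from order_tendstoD(1)[OF tl this] g_intn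
  show ?thesis
  proof eventually_elim
    case (elim n)
    have "integrable (Ps n) (\<lambda>x. min (g x) (real M))"
      by (rule Bochner_Integration.integrable_bound[OF elim(2)]) (use gPn g_nn in \<open>auto simp: min_def\<close>)
    then have "(\<integral>x. min (g x) (real M) \<partial>Ps n) \<le> integral\<^sup>L (Ps n) g"
      by (intro integral_mono elim(2)) auto
    with elim(1) M show ?case by linarith
  qed
qed


lemma aux_int:
  fixes M :: "'a measure" and h L :: "'a \<Rightarrow> real"
  assumes hi: "integrable M h" and Lm: "L \<in> borel_measurable M"
    and L0: "\<And>x. 0 \<le> L x" and LB: "\<And>x. L x \<le> B"
  shows "integrable M (\<lambda>x. h x * L x)"
    and "integral\<^sup>L M (\<lambda>x. B * \<bar>h x\<bar> + h x * L x) = B * integral\<^sup>L M (\<lambda>x. \<bar>h x\<bar>) + integral\<^sup>L M (\<lambda>x. h x * L x)"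
    and "integral\<^sup>L M (\<lambda>x. B * \<bar>h x\<bar> - h x * L x) = B * integral\<^sup>L M (\<lambda>x. \<bar>h x\<bar>) - integral\<^sup>L M (\<lambda>x. h x * L x)"
    and "integrable M (\<lambda>x. B * \<bar>h x\<bar> + h x * L x)"
    and "integrable M (\<lambda>x. B * \<bar>h x\<bar> - h x * L x)"
proof -
  have hm: "h \<in> borel_measurable M" using hi by auto
  have ib: "integrable M (\<lambda>x. B * \<bar>h x\<bar>)" using hi by auto
  have "\<bar>h x * L x\<bar> \<le> B * \<bar>h x\<bar>" for x
  proof -
    have "\<bar>h x * L x\<bar> = \<bar>h x\<bar> * L x" using L0[of x] by (simp add: abs_mult)
    also have "\<dots> \<le> \<bar>h x\<bar> * B" using LB[of x] by (intro mult_left_mono) auto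
    finally show ?thesis by (simp add: mult.commute)
  qed
  moreover have "0 \<le> B" using L0 LB order_trans by blast
  ultimately show ip: "integrable M (\<lambda>x. h x * L x)"
    using hm Lm by (intro Bochner_Integration.integrable_bound[OF ib]) auto
  show "integral\<^sup>L M (\<lambda>x. B * \<bar>h x\<bar> + h x * L x) = B * integral\<^sup>L M (\<lambda>x. \<bar>h x\<bar>) + integral\<^sup>L M (\<lambda>x. h x * L x)"
    using ib ip by simp
  show "integral\<^sup>L M (\<lambda>x. B * \<bar>h x\<bar> - h x * L x) = B * integral\<^sup>L M (\<lambda>x. \<bar>h x\<bar>) - integral\<^sup>L M (\<lambda>x. h x * L x)"
    using ib ip by simp
  show "integrable M (\<lambda>x. B * \<bar>h x\<bar> + h x * L x)" using ib ip by auto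
  show "integrable M (\<lambda>x. B * \<bar>h x\<bar> - h x * L x)" using ib ip by auto
qed

lemma post_int:
  fixes M :: "(real ^ 'd0 \<Rightarrow> real ^ 'dL) measure" and xs :: "'m::finite \<Rightarrow> real ^ 'd0"
    and l :: "real ^ 'dL ^ 'm \<Rightarrow> real" and h :: "(real ^ 'd0 \<Rightarrow> real ^ 'dL) \<Rightarrow> real"
  assumes Ms: "sets M = sets FM" and l_cont: "continuous_on UNIV l" and l_nonneg: "\<And>z. 0 \<le> l z"
    and hm: "h \<in> borel_measurable FM"
  shows "(\<integral>f. h f \<partial>(posterior M l xs)) =
     (\<integral>f. h f * l (evalX xs f) \<partial>M) / (\<integral>f. l (evalX xs f) \<partial>M)"
proof -
  define Z where "Z = (\<integral>f. l (evalX xs f) \<partial>M)"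
  have Lm: "(\<lambda>f. l (evalX xs f)) \<in> borel_measurable M"
    unfolding measurable_cong_sets[OF Ms refl]
    by (rule measurable_compose[OF evalX_meas borel_measurable_continuous_onI[OF l_cont]])
  have hM: "h \<in> borel_measurable M" unfolding measurable_cong_sets[OF Ms refl] by (rule hm)
  have Z0: "0 \<le> Z" unfolding Z_def using l_nonneg by (intro integral_nonneg_AE) auto
  have "(\<integral>f. h f \<partial>(posterior M l xs)) = (\<integral>f. (l (evalX xs f) / Z) *\<^sub>R h f \<partial>M)"
    unfolding posterior_def Z_def[symmetric]
    using Lm hM Z0 l_nonneg by (intro integral_density) auto
  also have "\<dots> = (\<integral>f. h f * l (evalX xs f) / Z \<partial>M)" by (simp add: mult.commute)
  also have "\<dots> = (\<integral>f. h f * l (evalX xs f) \<partial>M) / Z" by simp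
  finally show ?thesis unfolding Z_def .
qed

theorem corollary1:
  fixes Ps :: "nat \<Rightarrow> (real ^ 'd0 \<Rightarrow> real ^ 'dL) measure"
    and P :: "(real ^ 'd0 \<Rightarrow> real ^ 'dL) measure"
    and xs :: "'m::finite \<Rightarrow> real ^ 'd0"
    and l :: "real ^ 'dL ^ 'm \<Rightarrow> real"
    and h :: "(real ^ 'd0 \<Rightarrow> real ^ 'dL) \<Rightarrow> real"
  assumes Ps_prob: "\<And>n. prob_space (Ps n)" and Ps_sets: "\<And>n. sets (Ps n) = sets FM"
    and P_prob: "prob_space P" and P_sets: "sets P = sets FM"
    and weak: "weak_conv_fun Ps P"
    and l_cont: "continuous_on UNIV l" and l_bdd: "bounded (range l)"
    and l_nonneg: "\<And>z. 0 \<le> l z"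
    and l_pos: "(\<integral>f. l (evalX xs f) \<partial>P) > 0"
    and h_cont: "continuous_on UNIV h"
    and h_meas: "h \<in> borel_measurable FM"
    and h_conv: "(\<lambda>n. \<integral>\<^sup>+ f. ennreal \<bar>h f\<bar> \<partial>(Ps n)) \<longlonglongrightarrow> (\<integral>\<^sup>+ f. ennreal \<bar>h f\<bar> \<partial>P)"
    and h_fin: "(\<integral>\<^sup>+ f. ennreal \<bar>h f\<bar> \<partial>P) < \<infinity>"
  shows "(\<lambda>n. \<integral>f. h f \<partial>(posterior (Ps n) l xs)) \<longlonglongrightarrow> (\<integral>f. h f \<partial>(posterior P l xs))"
proof -
  define L where "L = (\<lambda>f. l (evalX xs f))"
  have L_meas: "L \<in> borel_measurable FM" unfolding L_def
    by (rule measurable_compose[OF evalX_meas borel_measurable_continuous_onI[OF l_cont]])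
  have L_cont: "continuous_on UNIV L" unfolding L_def
    by (rule continuous_on_compose2[OF l_cont evalX_cont]) auto
  obtain B where B: "\<And>z. norm (l z) \<le> B" using l_bdd unfolding bounded_iff by auto
  have LB: "L f \<le> B" for f using B[of "evalX xs f"] unfolding L_def by simp
  have L0: "0 \<le> L f" for f unfolding L_def by (rule l_nonneg)
  have L_bdd: "bounded (range L)"
    using l_bdd unfolding L_def by (rule bounded_subset) auto
  have Zconv: "(\<lambda>n. integral\<^sup>L (Ps n) L) \<longlonglongrightarrow> integral\<^sup>L P L"
    using weak L_cont L_bdd unfolding weak_conv_fun_def by blast
  have mP: "borel_measurable P = (borel_measurable FM :: (_ \<Rightarrow> real) set)"
    by (rule measurable_cong_sets[OF P_sets refl])
  have mPn: "borel_measurable (Ps n) = (borel_measurable FM :: (_ \<Rightarrow> real) set)" for n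
    by (rule measurable_cong_sets[OF Ps_sets refl])
  have hP: "integrable P h" using h_meas h_fin
    by (simp add: integrable_iff_bounded mP)
  have ev_int: "eventually (\<lambda>n. integrable (Ps n) h) sequentially"
    using order_tendstoD(2)[OF h_conv h_fin]
    by eventually_elim (simp add: integrable_iff_bounded mPn h_meas)
  define H where "H = enn2real (\<integral>\<^sup>+ f. ennreal \<bar>h f\<bar> \<partial>P)"
  have H_eq: "(\<integral>\<^sup>+ f. ennreal \<bar>h f\<bar> \<partial>P) = ennreal H"
    unfolding H_def using h_fin by (simp add: ennreal_enn2real_if less_top)
  have absint: "integral\<^sup>L M (\<lambda>f. \<bar>h f\<bar>) = enn2real (\<integral>\<^sup>+ f. ennreal \<bar>h f\<bar> \<partial>M)"
    if "h \<in> borel_measurable M" for M :: "(real ^ 'd0 \<Rightarrow> real ^ 'dL) measure"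
    using that by (intro integral_eq_nn_integral) auto
  have Hconv: "(\<lambda>n. integral\<^sup>L (Ps n) (\<lambda>f. \<bar>h f\<bar>)) \<longlonglongrightarrow> integral\<^sup>L P (\<lambda>f. \<bar>h f\<bar>)"
  proof -
    have "(\<lambda>n. enn2real (\<integral>\<^sup>+ f. ennreal \<bar>h f\<bar> \<partial>(Ps n))) \<longlonglongrightarrow> H"
    proof (rule tendsto_enn2real)
      show "(\<lambda>n. \<integral>\<^sup>+ f. ennreal \<bar>h f\<bar> \<partial>(Ps n)) \<longlonglongrightarrow> ennreal H"
        using h_conv unfolding H_eq .
      show "0 \<le> H" unfolding H_def by simp
    qed
    moreover have "integral\<^sup>L P (\<lambda>f. \<bar>h f\<bar>) = H" unfolding H_def
      using h_meas mP by (intro absint) auto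
    moreover have "integral\<^sup>L (Ps n) (\<lambda>f. \<bar>h f\<bar>) = enn2real (\<integral>\<^sup>+ f. ennreal \<bar>h f\<bar> \<partial>(Ps n))" for n
      using h_meas mPn by (intro absint) auto
    ultimately show ?thesis by presburger
  qed
  have BHconv: "(\<lambda>n. B * integral\<^sup>L (Ps n) (\<lambda>f. \<bar>h f\<bar>)) \<longlonglongrightarrow> B * integral\<^sup>L P (\<lambda>f. \<bar>h f\<bar>)"
    by (intro tendsto_mult_left Hconv)
  have LmP: "L \<in> borel_measurable P" using L_meas mP by simp
  have LmPn: "L \<in> borel_measurable (Ps n)" for n using L_meas mPn by simp
  note auxP = aux_int[OF hP LmP L0 LB]
  have g2c: "continuous_on UNIV (\<lambda>x. B * \<bar>h x\<bar> + h x * L x)"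
    by (intro continuous_intros h_cont L_cont)
  have g1c: "continuous_on UNIV (\<lambda>x. B * \<bar>h x\<bar> - h x * L x)"
    by (intro continuous_intros h_cont L_cont)
  have hL: "\<bar>h x * L x\<bar> \<le> B * \<bar>h x\<bar>" for x
  proof -
    have "\<bar>h x * L x\<bar> = \<bar>h x\<bar> * L x" using L0[of x] by (simp add: abs_mult)
    also have "\<dots> \<le> \<bar>h x\<bar> * B" using LB[of x] by (intro mult_left_mono) auto
    finally show ?thesis by (simp add: mult.commute)
  qed
  have g2n: "0 \<le> B * \<bar>h x\<bar> + h x * L x" for x using hL[of x] by linarith
  have g1n: "0 \<le> B * \<bar>h x\<bar> - h x * L x" for x using hL[of x] by linarith
  have g2m: "(\<lambda>x. B * \<bar>h x\<bar> + h x * L x) \<in> borel_measurable FM" using h_meas L_meas by measurable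
  have g1m: "(\<lambda>x. B * \<bar>h x\<bar> - h x * L x) \<in> borel_measurable FM" using h_meas L_meas by measurable
  have ev2: "eventually (\<lambda>n. integrable (Ps n) (\<lambda>x. B * \<bar>h x\<bar> + h x * L x)) sequentially"
    using ev_int by eventually_elim (rule aux_int(4)[OF _ LmPn L0 LB])
  have ev1: "eventually (\<lambda>n. integrable (Ps n) (\<lambda>x. B * \<bar>h x\<bar> - h x * L x)) sequentially"
    using ev_int by eventually_elim (rule aux_int(5)[OF _ LmPn L0 LB])
  note lsc2 = lsc_lemma[OF Ps_prob Ps_sets P_prob P_sets weak g2c g2n g2m auxP(4) ev2]
  note lsc1 = lsc_lemma[OF Ps_prob Ps_sets P_prob P_sets weak g1c g1n g1m auxP(5) ev1]
  have phiconv: "(\<lambda>n. \<integral>x. h x * L x \<partial>Ps n) \<longlonglongrightarrow> (\<integral>x. h x * L x \<partial>P)"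
  proof (rule order_tendstoI)
    fix y assume y: "y < (\<integral>x. h x * L x \<partial>P)"
    define e where "e = (\<integral>x. h x * L x \<partial>P) - y"
    have e: "e > 0" using y e_def by simp
    have "B * integral\<^sup>L P (\<lambda>f. \<bar>h f\<bar>) < B * integral\<^sup>L P (\<lambda>f. \<bar>h f\<bar>) + e/2" using e by simp
    from order_tendstoD(2)[OF BHconv this] lsc2[OF half_gt_zero[OF e]] ev_int
    show "eventually (\<lambda>n. y < (\<integral>x. h x * L x \<partial>Ps n)) sequentially"
    proof eventually_elim
      case (elim n)
      note a = aux_int[OF elim(3) LmPn L0 LB]
      show ?case using elim(1,2) a(2) auxP(2) e_def e by linarith
    qed
  next
    fix y assume y: "y > (\<integral>x. h x * L x \<partial>P)"
    define e where "e = y - (\<integral>x. h x * L x \<partial>P)"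
    have e: "e > 0" using y e_def by simp
    have "B * integral\<^sup>L P (\<lambda>f. \<bar>h f\<bar>) < B * integral\<^sup>L P (\<lambda>f. \<bar>h f\<bar>) + e/2" using e by simp
    from order_tendstoD(2)[OF BHconv this] lsc1[OF half_gt_zero[OF e]] ev_int
    show "eventually (\<lambda>n. y > (\<integral>x. h x * L x \<partial>Ps n)) sequentially"
    proof eventually_elim
      case (elim n)
      note a = aux_int[OF elim(3) LmPn L0 LB]
      show ?case using elim(1,2) a(3) auxP(3) e_def e by linarith
    qed
  qed
  have "(\<lambda>n. (\<integral>x. h x * L x \<partial>Ps n) / integral\<^sup>L (Ps n) L) \<longlonglongrightarrow>
        (\<integral>x. h x * L x \<partial>P) / integral\<^sup>L P L"
    using l_pos unfolding L_def[symmetric] by (intro tendsto_divide phiconv Zconv) auto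
  then show ?thesis
    using post_int[OF Ps_sets l_cont l_nonneg h_meas] post_int[OF P_sets l_cont l_nonneg h_meas]
    unfolding L_def by simp
qed

end
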